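(* Let $\mathscr C$ be a circle pattern for a graph $G$ and an admissible labelling $\alpha:E(G)\to[\alpha_0,\pi)$ with $0<\alpha_0\le\pi/2$, and assume all kites are convex. For each vertex $v$ let $B(v)$ be the closed disc bounded by $\mathscr C(v)$ (radius $r(v)$), $D(v)$ the union of all kites $K_e$ for edges $e$ incident to $v$, and $S(v)=B(v)\cap D(v)$. Then there is a constant $C_0\ge1$, possibly depending on $\inf_{e\in E}\alpha(e)$, such that for every interior vertex $v$ there exists a disc $I(v)\subseteq S(v)$ whose radius $r_I(v)>0$ satisfies $r(v)\le C_0\,r_I(v)$.
   Context: $G$ is the graph on the white vertices of a b-quad-graph (a strongly regular cell decomposition into quadrilaterals with bipartite 1-skeleton), adjacent iff incident to a common face. A labelling is admissible if at each interior black vertex the labels of incident faces sum to $2\pi$. A circle pattern for $G$ and $\alpha$: circles $\mathscr C(v)$ with centers $c(v)$ and radii $r(v)$ such that circles of adjacent vertices intersect with exterior intersection angle $\alpha(e)$ (the angle at an intersection point between the radii to the two centers), together with the kites $K_e$ formed by the two centers and the two intersection points, all equally oriented and locally isomorphic to the b-quad-graph at interior vertices. *)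

theory Defs
  imports "HOL-Analysis.Analysis"
begin

(* A face is written (v, b1, w, b2) in its (positive) cyclic order,
   starting at a white vertex; the same face is also listed as its rotation (w, b2, v, b1). *)

type_synonym 'v face = "'v \<times> 'v \<times> 'v \<times> 'v"

fun rot :: "'v face \<Rightarrow> 'v face" where
  "rot (a, b, c, d) = (c, d, a, b)"

fun fverts :: "'v face \<Rightarrow> 'v set" where
  "fverts (a, b, c, d) = {a, b, c, d}"

fun dedges :: "'v face \<Rightarrow> ('v \<times> 'v) set" where
  "dedges (a, b, c, d) = {(a, b), (b, c), (c, d), (d, a)}"

(* strongly regular, consistently oriented cell decomposition into quadrilaterals with
   bipartite 1-skeleton (white/black colouring) *)
definition bquad :: "'v set \<Rightarrow> 'v set \<Rightarrow> 'v face set \<Rightarrow> bool" where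
  "bquad W B F \<longleftrightarrow>
     W \<inter> B = {} \<and>
     (\<forall>(a, b, c, d) \<in> F. a \<in> W \<and> c \<in> W \<and> b \<in> B \<and> d \<in> B \<and> a \<noteq> c \<and> b \<noteq> d) \<and>
     (\<forall>f \<in> F. rot f \<in> F) \<and>
     (\<forall>x \<in> W \<union> B. \<exists>f \<in> F. x \<in> fverts f) \<and>
     (\<forall>f \<in> F. \<forall>g \<in> F. dedges f \<inter> dedges g \<noteq> {} \<longrightarrow> g = f \<or> g = rot f) \<and>
     (\<forall>f \<in> F. \<forall>g \<in> F. g \<noteq> f \<and> g \<noteq> rot f \<longrightarrow>
        (fverts f \<inter> fverts g = {} \<or> (\<exists>x. fverts f \<inter> fverts g = {x}) \<or>
         (\<exists>x y. x \<in> W \<and> y \<in> B \<and> fverts f \<inter> fverts g = {x, y})))"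

definition faces_at_white :: "'v face set \<Rightarrow> 'v \<Rightarrow> 'v face set" where
  "faces_at_white F v = {f \<in> F. fst f = v}"

definition faces_at_black :: "'v face set \<Rightarrow> 'v \<Rightarrow> 'v face set" where
  "faces_at_black F b = {f \<in> F. fst (snd f) = b}"

(* interior white vertex: its incident faces form one closed cycle
   (v, b_0, w_0, b_1), (v, b_1, w_1, b_2), ..., (v, b_{n-1}, w_{n-1}, b_0) *)
definition interior_white :: "'v set \<Rightarrow> 'v face set \<Rightarrow> 'v \<Rightarrow> bool" where
  "interior_white W F v \<longleftrightarrow> v \<in> W \<and>
     (\<exists>n bs ws. n \<ge> 1 \<and> length bs = n \<and> length ws = n \<and> distinct bs \<and>
        faces_at_white F v = {(v, bs ! i, ws ! i, bs ! ((i + 1) mod n)) | i. i < n})"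

(* interior black vertex: its incident faces form one closed cycle
   (a_0, b, a_1, d_0), (a_1, b, a_2, d_1), ..., (a_{n-1}, b, a_0, d_{n-1}) *)
definition interior_black :: "'v set \<Rightarrow> 'v face set \<Rightarrow> 'v \<Rightarrow> bool" where
  "interior_black B F b \<longleftrightarrow> b \<in> B \<and>
     (\<exists>n as ds. n \<ge> 1 \<and> length as = n \<and> length ds = n \<and> distinct as \<and>
        faces_at_black F b = {(as ! i, b, as ! ((i + 1) mod n), ds ! i) | i. i < n})"

(* labelling alpha on edges {v,w} of G; admissible: at each interior black vertex the labels
   of the incident faces sum to 2 pi (each face at b corresponds to the edge {a,c} of G) *)
definition admissible :: "'v set \<Rightarrow> 'v face set \<Rightarrow> ('v set \<Rightarrow> real) \<Rightarrow> bool" where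
  "admissible B F \<alpha> \<longleftrightarrow>
     (\<forall>b. interior_black B F b \<longrightarrow>
        finite (faces_at_black F b) \<and>
        (\<Sum>(a, b', c, d) \<in> faces_at_black F b. \<alpha> {a, c}) = 2 * pi)"

definition ang :: "complex \<Rightarrow> complex \<Rightarrow> complex \<Rightarrow> real" where
  "ang p q s = arccos (Re (cnj (p - q) * (s - q)) / (cmod (p - q) * cmod (s - q)))"

(* The kite of the face (v, b1, w, b2): c v, c w are the circle centers, c b1, c b2 the
   intersection points.  Its closed region: the kite is symmetric about the diagonal
   c v -- c w, so the region is the union of the two triangles on that diagonal. *)
fun kite :: "('v \<Rightarrow> complex) \<Rightarrow> 'v face \<Rightarrow> complex set" where
  "kite c (v, b1, w, b2) = convex hull {c v, c b1, c w} \<union> convex hull {c v, c b2, c w}"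

fun kite_oriented :: "real \<Rightarrow> ('v \<Rightarrow> complex) \<Rightarrow> 'v face \<Rightarrow> bool" where
  "kite_oriented \<epsilon> c (v, b1, w, b2) \<longleftrightarrow>
     \<epsilon> * Im (cnj (c w - c v) * (c b2 - c v)) > 0 \<and>
     \<epsilon> * Im (cnj (c w - c v) * (c b1 - c v)) < 0"

(* Circle pattern for G and alpha.  c v (v white) is the center of the circle of v with radius
   r v; c b (b black) is the common intersection point of the circles of the white
   neighbours of b.  For every face (edge e = {v,w}) the circles intersect in the two
   points c b1, c b2 with exterior intersection angle alpha e (angle at the intersection point
   between the radii to the two centers); all kites are equally oriented; at interior white
   vertices the kites form a flower (interior angles at the center sum to 2 pi; note the
   interior kite angle at c v equals twice the angle between c b1 - c v and c w - c v);
   at interior black vertices this follows from admissibility. *)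
definition circle_pattern ::
  "'v set \<Rightarrow> 'v set \<Rightarrow> 'v face set \<Rightarrow> ('v set \<Rightarrow> real) \<Rightarrow>
   ('v \<Rightarrow> complex) \<Rightarrow> ('v \<Rightarrow> real) \<Rightarrow> bool" where
  "circle_pattern W B F \<alpha> c r \<longleftrightarrow>
     (\<forall>v \<in> W. r v > 0) \<and>
     (\<forall>(v, b1, w, b2) \<in> F.
        cmod (c b1 - c v) = r v \<and> cmod (c b2 - c v) = r v \<and>
        cmod (c b1 - c w) = r w \<and> cmod (c b2 - c w) = r w \<and>
        c b1 \<noteq> c b2 \<and>
        ang (c v) (c b1) (c w) = \<alpha> {v, w} \<and> ang (c v) (c b2) (c w) = \<alpha> {v, w}) \<and>
     (\<exists>\<epsilon> \<in> {1, -1}. \<forall>f \<in> F. kite_oriented \<epsilon> c f) \<and>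
     (\<forall>v. interior_white W F v \<longrightarrow>
        finite (faces_at_white F v) \<and>
        (\<Sum>(v', b1, w, b2) \<in> faces_at_white F v. 2 * ang (c b1) (c v) (c w)) = 2 * pi)"

definition Dset :: "'v face set \<Rightarrow> ('v \<Rightarrow> complex) \<Rightarrow> 'v \<Rightarrow> complex set" where
  "Dset F c v = \<Union> (kite c ` faces_at_white F v)"

definition Sset :: "'v face set \<Rightarrow> ('v \<Rightarrow> complex) \<Rightarrow> ('v \<Rightarrow> real) \<Rightarrow> 'v \<Rightarrow> complex set" where
  "Sset F c r v = cball (c v) (r v) \<inter> Dset F c v"

end

theory Submission
  imports Defs
begin

lemma cos_ang:
  assumes "p \<noteq> q" "s \<noteq> q"
  shows "cos (ang p q s) = Re (cnj (p - q) * (s - q)) / (cmod (p - q) * cmod (s - q))"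
proof -
  have pos: "cmod (p - q) * cmod (s - q) > 0" using assms by simp
  have "\<bar>Re (cnj (p - q) * (s - q))\<bar> \<le> cmod (cnj (p - q) * (s - q))" by (rule abs_Re_le_cmod)
  also have "\<dots> = cmod (p - q) * cmod (s - q)" by (simp only: norm_mult complex_mod_cnj)
  finally have h: "\<bar>Re (cnj (p - q) * (s - q))\<bar> \<le> cmod (p - q) * cmod (s - q)" .
  have "\<bar>Re (cnj (p - q) * (s - q)) / (cmod (p - q) * cmod (s - q))\<bar> \<le> 1"
    using pos h by (metis abs_divide abs_of_pos divide_le_eq_1_pos)
  then show ?thesis unfolding ang_def by (rule cos_arccos_abs)
qed

lemma seg_dist:
  fixes p B W :: complex
  assumes "cmod (B - p) = R" "R > 0" "cos (ang p B W) \<le> k" "0 \<le> k" "0 \<le> l" "l \<le> 1"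
  shows "R^2 * (1 - k^2) \<le> (cmod (B + of_real l * (W - B) - p))^2"
proof (cases "W = B")
  case True
  then show ?thesis using assms by (simp add: algebra_simps)
next
  case False
  define u where "u = p - B"
  define v where "v = W - B"
  define d where "d = Re (cnj u * v)"
  define L where "L = cmod v"
  have L: "L > 0" using False unfolding L_def v_def by simp
  have uR: "cmod u = R" using assms(1) unfolding u_def by (simp add: norm_minus_commute)
  have pB: "p \<noteq> B" using uR assms(2) u_def by auto
  have c: "cos (ang p B W) = d / (R * L)"
    using cos_ang[OF pB False] uR unfolding d_def L_def u_def v_def by simp
  have e1: "B + of_real l * (W - B) - p = of_real l * v - u" unfolding u_def v_def by simp
  have id: "(cmod (of_real l * v - u))^2 = l^2 * L^2 - 2 * l * d + R^2"
  proof -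
    have "(cmod (of_real l * v - u))^2 = (l * Re v - Re u)^2 + (l * Im v - Im u)^2"
      by (simp add: cmod_power2)
    also have "\<dots> = l^2 * ((Re v)^2 + (Im v)^2) - 2 * l * (Re u * Re v + Im u * Im v) + ((Re u)^2 + (Im u)^2)"
      by (simp add: power2_eq_square algebra_simps)
    also have "\<dots> = l^2 * L^2 - 2 * l * d + R^2"
      unfolding L_def d_def uR[symmetric] cmod_power2 by simp
    finally show ?thesis .
  qed
  show ?thesis unfolding e1 id
  proof (cases "d \<le> 0")
    case True
    have "l * d \<le> 0" using True assms(5) by (simp add: mult_nonneg_nonpos)
    moreover have "0 \<le> l^2 * L^2" by simp
    moreover have "R^2 * (1 - k^2) \<le> R^2" using assms(4) by (simp add: mult_left_le)
    ultimately show "R^2 * (1 - k^2) \<le> l^2 * L^2 - 2 * l * d + R^2" by linarith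
  next
    case False
    have "d / (R * L) \<le> k" using c assms(3) by simp
    then have dk: "d \<le> k * (R * L)" using L assms(2) by (simp add: divide_le_eq)
    have "d^2 \<le> (k*(R*L))^2" using dk False by (intro power_mono) auto
    then have h: "d^2 \<le> k^2*R^2*L^2" by (simp add: power_mult_distrib mult.assoc)
    have sq: "0 \<le> (l * L^2 - d)^2" by simp
    have ex: "(l * L^2 - d)^2 = L^2 * (l^2 * L^2 - 2 * l * d) + d^2"
      by (simp add: power2_eq_square algebra_simps)
    have "0 \<le> L^2 * (l^2 * L^2 - 2 * l * d) + k^2*R^2*L^2" using sq ex h by linarith
    then have "0 \<le> L^2 * (l^2 * L^2 - 2 * l * d + k^2*R^2)" by (simp add: algebra_simps)
    then have "0 \<le> l^2 * L^2 - 2 * l * d + k^2*R^2" using L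
      by (simp add: zero_le_mult_iff)
    then show "R^2 * (1 - k^2) \<le> l^2 * L^2 - 2 * l * d + R^2" by (simp add: algebra_simps)
  qed
qed

lemma k2_lemma: "0 \<le> (k::real) \<Longrightarrow> k < 1 \<Longrightarrow> 0 < 1 - k^2"
  using power_strict_mono[of k 1 2] by simp

lemma tri_lemma:
  fixes p B W z :: complex
  assumes "cmod (B - p) = R" "R > 0" "cos (ang p B W) \<le> k" "0 \<le> k" "k < 1"
    and "z - p = of_real a * (B - p) + of_real b * (W - p)" "a \<ge> 0" "b \<ge> 0"
    and "cmod (z - p) \<le> R * sqrt (1 - k^2)"
  shows "z \<in> convex hull {p, B, W}"
proof (cases "a + b = 0")
  case True
  then have "a = 0" "b = 0" using assms(7,8) by auto
  then have "z = p" using assms(6) by simp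
  then show ?thesis by (simp add: hull_inc)
next
  case False
  then have ab: "a + b > 0" using assms(7,8) by simp
  define l where "l = b / (a + b)"
  have l0: "0 \<le> l" "l \<le> 1" using ab assms(7,8) unfolding l_def by auto
  have abl: "(a + b) * l = b" unfolding l_def using ab by simp
  define q where "q = B + of_real l * (W - B)"
  have "of_real (a + b) * (q - p) = of_real (a + b) * (B - p) + of_real ((a + b) * l) * (W - B)"
    unfolding q_def by (simp add: algebra_simps)
  also have "\<dots> = z - p" unfolding abl assms(6) by (simp add: algebra_simps)
  finally have zq: "z - p = of_real (a + b) * (q - p)" by simp
  have k2: "0 < 1 - k^2" using assms(4,5) by (rule k2_lemma)
  have "R^2 * (1 - k^2) \<le> (cmod (q - p))^2" unfolding q_def
    by (rule seg_dist[OF assms(1-4) l0])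
  then have "sqrt (R^2 * (1 - k^2)) \<le> sqrt ((cmod (q - p))^2)" by (rule real_sqrt_le_mono)
  then have qp: "R * sqrt (1 - k^2) \<le> cmod (q - p)" using assms(2)
    by (simp only: real_sqrt_mult real_sqrt_abs abs_norm_cancel abs_of_pos)
  have pos: "0 < R * sqrt (1 - k^2)" using assms(2) k2 by simp
  have "cmod (z - p) = (a + b) * cmod (q - p)" unfolding zq using ab by (simp only: norm_mult norm_of_real abs_of_pos)
  then have "(a + b) * cmod (q - p) \<le> R * sqrt (1 - k^2)" using assms(9) by simp
  then have "(a + b) * cmod (q - p) \<le> 1 * cmod (q - p)" using qp by linarith
  moreover have "cmod (q - p) > 0" using qp pos by linarith
  ultimately have ab1: "a + b \<le> 1" by (rule mult_right_le_imp_le)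
  have "z = (1 - a - b) *\<^sub>R p + a *\<^sub>R B + b *\<^sub>R W"
    using assms(6) by (simp add: scaleR_conv_of_real algebra_simps)
  then show ?thesis unfolding convex_hull_3 using ab1 assms(7,8)
    by (intro CollectI exI[of _ "1 - a - b"] exI[of _ a] exI[of _ b]) auto
qed

lemma wedge:
  assumes "\<epsilon> = 1 \<or> \<epsilon> = -1" "0 < \<theta>" "\<theta> < pi" "0 \<le> s" "s \<le> \<theta>"
  shows "cis (\<epsilon> * s) = of_real (sin (\<theta> - s) / sin \<theta>) + of_real (sin s / sin \<theta>) * cis (\<epsilon> * \<theta>)"
    "0 \<le> sin (\<theta> - s) / sin \<theta>" "0 \<le> sin s / sin \<theta>"
proof -
  have st: "sin \<theta> > 0" using assms by (simp add: sin_gt_zero)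
  have "sin (\<theta> - s) \<ge> 0" using assms by (intro sin_ge_zero) auto
  then show "0 \<le> sin (\<theta> - s) / sin \<theta>" using st by simp
  have "sin s \<ge> 0" using assms by (intro sin_ge_zero) auto
  then show "0 \<le> sin s / sin \<theta>" using st by simp
  have re: "cos s = sin (\<theta> - s) / sin \<theta> + sin s / sin \<theta> * cos \<theta>"
    using st by (simp add: field_simps sin_diff)
  show "cis (\<epsilon> * s) = of_real (sin (\<theta> - s) / sin \<theta>) + of_real (sin s / sin \<theta>) * cis (\<epsilon> * \<theta>)"
    using assms(1)
  proof
    assume e: "\<epsilon> = 1"
    show ?thesis unfolding e using st re by (intro complex_eqI) (simp_all add: cis.sel)
  next
    assume e: "\<epsilon> = -1"
    show ?thesis unfolding e using st re by (intro complex_eqI) (simp_all add: cis.sel)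
  qed
qed

lemma cnj_prod_polar:
  fixes x y :: complex
  assumes "cmod x = R" "R > 0" "\<epsilon> = 1 \<or> \<epsilon> = -1" "\<epsilon> * Im (cnj x * y) > 0"
  defines "\<theta> \<equiv> arccos (Re (cnj x * y) / (cmod x * cmod y))"
  shows "0 < \<theta>" "\<theta> < pi" "cnj x * y = of_real (R * cmod y) * cis (\<epsilon> * \<theta>)"
proof -
  define z where "z = cnj x * y"
  have y0: "y \<noteq> 0" using assms(4) by auto
  have ny: "cmod y > 0" using y0 by simp
  have nz: "(Re z)^2 + (Im z)^2 = (R * cmod y)^2"
    unfolding z_def cmod_power2[symmetric] using assms(1) by (simp add: norm_mult power_mult_distrib)
  have Imz: "\<epsilon> * Im z > 0" using assms(4) z_def by simp
  have "\<bar>Re z\<bar> \<le> cmod z" by (rule abs_Re_le_cmod)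
  also have "cmod z = R * cmod y" unfolding z_def using assms(1) by (simp add: norm_mult)
  finally have b0: "\<bar>Re z\<bar> \<le> R * cmod y" .
  have pos: "R * cmod y > 0" using assms(2) ny by simp
  have b: "\<bar>Re z / (R * cmod y)\<bar> \<le> 1" using pos b0 by (metis abs_divide abs_of_pos divide_le_eq_1_pos)
  have th: "\<theta> = arccos (Re z / (R * cmod y))" unfolding \<theta>_def z_def assms(1) ..
  have c: "cos \<theta> = Re z / (R * cmod y)" unfolding th by (rule cos_arccos_abs[OF b])
  have r0: "0 \<le> \<theta>" "\<theta> \<le> pi" unfolding th using abs_le_D1[OF b] abs_le_D2[OF b]
    by (auto intro!: arccos_lbound arccos_ubound simp del: abs_divide)
  have s0: "sin \<theta> \<ge> 0" using r0 by (simp add: sin_ge_zero)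
  have "(sin \<theta>)^2 = 1 - (cos \<theta>)^2" by (simp add: sin_squared_eq)
  also have "\<dots> = (Im z / (R * cmod y))^2" unfolding c using nz assms(2) ny
    by (simp add: field_simps)
  finally have "(sin \<theta>)^2 = (\<epsilon> * Im z / (R * cmod y))^2" using assms(3) by auto
  moreover have "\<epsilon> * Im z / (R * cmod y) \<ge> 0" using Imz assms(2) ny by simp
  ultimately have s: "sin \<theta> = \<epsilon> * Im z / (R * cmod y)" using s0
    by (metis power2_eq_iff_nonneg)
  have sp: "sin \<theta> > 0" unfolding s using Imz assms(2) ny by simp
  show "0 < \<theta>" using sp r0 by (metis less_eq_real_def sin_zero)
  show "\<theta> < pi" using sp r0 by (metis less_eq_real_def sin_pi less_irrefl)
  have e2: "\<epsilon> * \<epsilon> = 1" using assms(3) by auto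
  have "sin (\<epsilon> * \<theta>) = \<epsilon> * sin \<theta>" using assms(3) by auto
  then have si: "sin (\<epsilon> * \<theta>) * (R * cmod y) = Im z"
    unfolding s using assms(2) ny e2 by (simp add: field_simps)
  have co: "cos (\<epsilon> * \<theta>) * (R * cmod y) = Re z"
    using assms(3) c assms(2) ny by (auto simp: field_simps)
  show "cnj x * y = of_real (R * cmod y) * cis (\<epsilon> * \<theta>)"
    unfolding z_def[symmetric] using si co by (intro complex_eqI) (simp_all add: cis.sel mult.commute)
qed

lemma refl_lemma:
  fixes x x' y :: complex
  assumes "cmod x = R" "cmod x' = R" "R > 0" "cmod (x - y) = cmod (x' - y)" "\<epsilon> = 1 \<or> \<epsilon> = -1"
    "\<epsilon> * Im (cnj y * x') > 0" "\<epsilon> * Im (cnj y * x) < 0"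
  defines "\<theta> \<equiv> arccos (Re (cnj x * y) / (cmod x * cmod y))"
  shows "0 < \<theta>" "\<theta> < pi" "y = of_real (cmod y / R) * x * cis (\<epsilon> * \<theta>)"
    "x' = x * cis (2 * \<epsilon> * \<theta>)"
proof -
  have "Im (cnj x * y) = - Im (cnj y * x)" "Im (cnj x' * y) = - Im (cnj y * x')" by (simp_all add: algebra_simps)
  then have i1: "\<epsilon> * Im (cnj x * y) > 0" and i2: "(-\<epsilon>) * Im (cnj x' * y) > 0" using assms(6,7) by (simp_all only:)
  have e2: "-\<epsilon> = 1 \<or> -\<epsilon> = -1" using assms(5) by auto
  note P1 = cnj_prod_polar[OF assms(1,3,5) i1]
  note P2 = cnj_prod_polar[OF assms(2,3) e2 i2]
  have "(cmod (x - y))^2 = (cmod (x' - y))^2" using assms(4) by simp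
  moreover have "(Re x)^2 + (Im x)^2 = R^2" "(Re x')^2 + (Im x')^2 = R^2"
    using assms(1,2) cmod_power2 by metis+
  ultimately have "Re (cnj x * y) = Re (cnj x' * y)"
    unfolding cmod_power2 by (simp add: power2_eq_square algebra_simps)
  then have th': "arccos (Re (cnj x' * y) / (cmod x' * cmod y)) = \<theta>"
    unfolding \<theta>_def assms(1,2) by simp
  show "0 < \<theta>" unfolding \<theta>_def by (rule P1(1))
  show "\<theta> < pi" unfolding \<theta>_def by (rule P1(2))
  have y0: "y \<noteq> 0" using i1 by auto
  have xx: "x * cnj x = of_real (R^2)" using assms(1) by (metis complex_norm_square)
  have xx': "x' * cnj x' = of_real (R^2)" using assms(2) by (metis complex_norm_square)
  have A: "of_real (R^2) * y = x * of_real (R * cmod y) * cis (\<epsilon> * \<theta>)"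
    using arg_cong[OF P1(3)[folded \<theta>_def], of "\<lambda>t. x * t"] xx by (simp add: mult.assoc[symmetric])
  have B: "of_real (R^2) * y = x' * of_real (R * cmod y) * cis (-\<epsilon> * \<theta>)"
    using arg_cong[OF P2(3)[unfolded th'], of "\<lambda>t. x' * t"] xx' by (simp add: mult.assoc[symmetric])
  have Rc: "(of_real R :: complex) \<noteq> 0" using assms(3) by simp
  show "y = of_real (cmod y / R) * x * cis (\<epsilon> * \<theta>)"
    using A Rc by (simp add: field_simps power2_eq_square)
  have "x * cis (\<epsilon> * \<theta>) = x' * cis (-\<epsilon> * \<theta>)" using A B Rc y0
    by (simp add: power2_eq_square)
  then have "x * cis (\<epsilon> * \<theta>) * cis (\<epsilon> * \<theta>) = x'"
    by (simp add: mult.assoc cis_mult)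
  then show "x' = x * cis (2 * \<epsilon> * \<theta>)" by (simp add: mult.assoc cis_mult)
qed

lemma find_interval:
  fixes S :: "nat \<Rightarrow> real"
  assumes "\<And>i. i < n \<Longrightarrow> S i \<le> S (Suc i)" "S 0 = 0" "0 \<le> t" "t \<le> S n" "0 < n"
  shows "\<exists>i<n. S i \<le> t \<and> t \<le> S (Suc i)"
  using assms(1,4,5)
proof (induction n)
  case 0
  then show ?case by simp
next
  case (Suc n)
  show ?case
  proof (cases "n > 0 \<and> t \<le> S n")
    case True
    then obtain i where "i < n" "S i \<le> t" "t \<le> S (Suc i)" using Suc.IH Suc.prems(1) by force
    then show ?thesis by (intro exI[of _ i]) auto
  next
    case False
    then have "S n \<le> t" using assms(2,3) by (cases "n = 0") auto
    then show ?thesis using Suc.prems by (intro exI[of _ n]) auto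
  qed
qed

theorem lemma5p2:
  fixes \<alpha>\<^sub>0 :: real
  assumes "0 < \<alpha>\<^sub>0" and "\<alpha>\<^sub>0 \<le> pi / 2"
  shows "\<exists>C\<^sub>0 \<ge> 1. \<forall>(W :: 'v set) B F \<alpha> c r.
           bquad W B F \<and> admissible B F \<alpha> \<and>
           (\<forall>(v, b1, w, b2) \<in> F. \<alpha>\<^sub>0 \<le> \<alpha> {v, w} \<and> \<alpha> {v, w} < pi) \<and>
           circle_pattern W B F \<alpha> c r \<and>
           (\<forall>f \<in> F. convex (kite c f)) \<longrightarrow>
           (\<forall>v. interior_white W F v \<longrightarrow>
              (\<exists>z \<rho>. \<rho> > 0 \<and> cball z \<rho> \<subseteq> Sset F c r v \<and> r v \<le> C\<^sub>0 * \<rho>))"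
proof -
  define k where "k = cos \<alpha>\<^sub>0"
  have k0: "0 \<le> k" unfolding k_def using assms by (intro cos_ge_zero) auto
  have k1: "k < 1" unfolding k_def using assms cos_monotone_0_pi[of 0 \<alpha>\<^sub>0] by auto
  have k2: "0 < 1 - k^2" using k0 k1
    by (rule k2_lemma)
  define s where "s = sqrt (1 - k^2)"
  have s0: "0 < s" "s \<le> 1" unfolding s_def using k2 k0 by auto
  define C where "C = 1 / s"
  have C1: "C \<ge> 1" unfolding C_def using s0 by simp
  have cosk: "cos a \<le> k" if "\<alpha>\<^sub>0 \<le> a" "a < pi" for a
    unfolding k_def using that assms by (intro cos_monotone_0_pi_le) auto
  show ?thesis
  proof (intro exI[of _ C] conjI C1 allI impI)
    fix W :: "'v set" and B F \<alpha> c r v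
    assume H: "bquad W B F \<and> admissible B F \<alpha> \<and>
           (\<forall>(v, b1, w, b2) \<in> F. \<alpha>\<^sub>0 \<le> \<alpha> {v, w} \<and> \<alpha> {v, w} < pi) \<and>
           circle_pattern W B F \<alpha> c r \<and> (\<forall>f \<in> F. convex (kite c f))"
      and iw: "interior_white W F v"
    from H have Hal: "\<forall>(v, b1, w, b2) \<in> F. \<alpha>\<^sub>0 \<le> \<alpha> {v, w} \<and> \<alpha> {v, w} < pi"
      and cp: "circle_pattern W B F \<alpha> c r" by auto
    from iw obtain n bs ws where n1: "n \<ge> 1" and len: "length bs = n" "length ws = n"
      and dist: "distinct bs"
      and fa: "faces_at_white F v = {(v, bs ! i, ws ! i, bs ! ((i + 1) mod n)) | i. i < n}"
      and vW: "v \<in> W"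
      unfolding interior_white_def by blast
    define f where "f i = (v, bs ! i, ws ! i, bs ! ((i + 1) mod n))" for i
    have fa': "faces_at_white F v = f ` {..<n}" unfolding fa f_def by auto
    have fF: "f i \<in> F" if "i < n" for i
      using that fa' unfolding faces_at_white_def by auto
    from cp obtain \<epsilon> where eps: "\<epsilon> = 1 \<or> \<epsilon> = -1" and ori: "\<forall>f \<in> F. kite_oriented \<epsilon> c f"
      unfolding circle_pattern_def by auto
    define R where "R = r v"
    have R0: "R > 0" using cp vW unfolding circle_pattern_def R_def by auto
    define x where "x i = c (bs ! i) - c v" for i
    define y where "y i = c (ws ! i) - c v" for i
    define \<theta> where "\<theta> i = ang (c (bs ! i)) (c v) (c (ws ! i))" for i
    define j where "j i = (i + 1) mod n" for i
    have face: "cmod (x i) = R \<and> cmod (x (j i)) = R \<and> cmod (x i - y i) = cmod (x (j i) - y i) \<and>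
      cos (ang (c v) (c (bs ! i)) (c (ws ! i))) \<le> k \<and> cos (ang (c v) (c (bs ! j i)) (c (ws ! i))) \<le> k \<and>
      \<epsilon> * Im (cnj (y i) * x (j i)) > 0 \<and> \<epsilon> * Im (cnj (y i) * x i) < 0" if "i < n" for i
    proof -
      have fi: "f i \<in> F" using fF that .
      have cpF: "\<forall>(v, b1, w, b2) \<in> F.
        cmod (c b1 - c v) = r v \<and> cmod (c b2 - c v) = r v \<and>
        cmod (c b1 - c w) = r w \<and> cmod (c b2 - c w) = r w \<and>
        c b1 \<noteq> c b2 \<and>
        ang (c v) (c b1) (c w) = \<alpha> {v, w} \<and> ang (c v) (c b2) (c w) = \<alpha> {v, w}"
        using cp unfolding circle_pattern_def by blast
      have A: "cmod (c (bs ! i) - c v) = r v \<and> cmod (c (bs ! j i) - c v) = r v \<and>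
        cmod (c (bs ! i) - c (ws ! i)) = r (ws ! i) \<and> cmod (c (bs ! j i) - c (ws ! i)) = r (ws ! i) \<and>
        c (bs ! i) \<noteq> c (bs ! j i) \<and>
        ang (c v) (c (bs ! i)) (c (ws ! i)) = \<alpha> {v, ws ! i} \<and>
        ang (c v) (c (bs ! j i)) (c (ws ! i)) = \<alpha> {v, ws ! i}"
        using bspec[OF cpF fi] unfolding f_def j_def by simp
      have B: "\<alpha>\<^sub>0 \<le> \<alpha> {v, ws ! i} \<and> \<alpha> {v, ws ! i} < pi"
        using bspec[OF Hal fi] unfolding f_def by simp
      have O: "kite_oriented \<epsilon> c (f i)" using ori fi by blast
      show ?thesis using A B O cosk unfolding x_def y_def R_def f_def j_def by auto
    qed
    have rf: "0 < \<theta> i \<and> \<theta> i < pi \<and> y i = of_real (cmod (y i) / R) * x i * cis (\<epsilon> * \<theta> i) \<and>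
        x (j i) = x i * cis (2 * \<epsilon> * \<theta> i)" if "i < n" for i
    proof -
      have th: "\<theta> i = arccos (Re (cnj (x i) * y i) / (cmod (x i) * cmod (y i)))"
        unfolding \<theta>_def ang_def x_def y_def ..
      show ?thesis using refl_lemma[of "x i" R "x (j i)" "y i" \<epsilon>] face[OF that] R0 eps
        unfolding th[symmetric] by auto
    qed
    have inj: "inj_on f {..<n}"
    proof
      fix a b assume "a \<in> {..<n}" "b \<in> {..<n}" "f a = f b"
      then show "a = b" unfolding f_def using dist len by (simp add: nth_eq_iff_index_eq)
    qed
    have "(\<Sum>(v', b1, w, b2) \<in> faces_at_white F v. 2 * ang (c b1) (c v) (c w)) = 2 * pi"
      using cp iw unfolding circle_pattern_def by blast
    then have sum: "(\<Sum>i<n. 2 * \<theta> i) = 2 * pi"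
      unfolding fa' sum.reindex[OF inj] by (simp add: f_def \<theta>_def)
    define S where "S m = (\<Sum>i<m. 2 * \<theta> i)" for m
    have Sn: "S n = 2 * pi" using sum S_def by simp
    have Smono: "S i \<le> S (Suc i)" if "i < n" for i
      using rf[OF that] unfolding S_def by simp
    have xS: "x i = x 0 * cis (\<epsilon> * S i)" if "i < n" for i
      using that
    proof (induction i)
      case 0
      then show ?case by (simp add: S_def)
    next
      case (Suc i)
      have "j i = Suc i" unfolding j_def using Suc.prems by simp
      then have "x (Suc i) = x i * cis (2 * \<epsilon> * \<theta> i)" using rf[of i] Suc.prems by auto
      also have "\<dots> = x 0 * cis (\<epsilon> * S (Suc i))" using Suc by (simp add: S_def mult.assoc cis_mult algebra_simps)
      finally show ?case .
    qed
    define \<rho> where "\<rho> = R * s"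
    have rho0: "\<rho> > 0" "\<rho> \<le> R" unfolding \<rho>_def using R0 s0 by auto
    have kite1: "convex hull {c v, c (bs ! i), c (ws ! i)} \<subseteq> kite c (f i)" for i
      unfolding f_def by simp
    have kite2: "convex hull {c v, c (bs ! j i), c (ws ! i)} \<subseteq> kite c (f i)" for i
      unfolding f_def j_def by auto
    have x0: "x 0 \<noteq> 0" using face[of 0] n1 R0 by auto
    have cover: "\<exists>i<n. z \<in> kite c (f i)" if zin: "cmod (z - c v) \<le> \<rho>" for z
    proof (cases "z = c v")
      case True
      then have "z \<in> kite c (f 0)" using kite1[of 0] by (auto intro: hull_inc)
      then show ?thesis using n1 by (intro exI[of _ 0]) auto
    next
      case False
      define q where "q = z - c v"
      have q0: "q \<noteq> 0" using False q_def by simp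
      define w where "w = q / x 0"
      have w0: "w \<noteq> 0" using q0 x0 w_def by simp
      define a where "a = \<epsilon> * Arg w"
      define t where "t = (if a \<ge> 0 then a else a + 2 * pi)"
      have ab: "- pi \<le> a" "a \<le> pi" using Arg_bounded[of w] eps unfolding a_def by auto
      have t0: "0 \<le> t" "t \<le> S n" unfolding Sn t_def using ab by auto
      have ct: "cis (\<epsilon> * t) = cis (Arg w)"
      proof -
        have "cis (\<epsilon> * a) = cis (Arg w)" unfolding a_def using eps by auto
        moreover have "cis (\<epsilon> * (a + 2 * pi)) = cis (\<epsilon> * a) * cis (\<epsilon> * (2 * pi))"
          by (simp add: cis_mult distrib_left)
        moreover have "cis (\<epsilon> * (2 * pi)) = 1"
          using eps by (auto simp: complex_eq_iff)
        ultimately have "cis (\<epsilon> * (a + 2 * pi)) = cis (\<epsilon> * a)" by simp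
        then show ?thesis unfolding t_def using \<open>cis (\<epsilon> * a) = cis (Arg w)\<close> by auto
      qed
      define \<mu> where "\<mu> = cmod w"
      have mu0: "\<mu> \<ge> 0" unfolding \<mu>_def by simp
      have qt: "q = of_real \<mu> * x 0 * cis (\<epsilon> * t)"
      proof -
        have "cis (Arg w) = w / of_real \<mu>" using cis_Arg[OF w0] unfolding \<mu>_def
          by (simp add: sgn_div_norm divide_inverse scaleR_conv_of_real mult.commute)
        then show ?thesis unfolding ct using w0 x0 unfolding w_def \<mu>_def by (simp add: field_simps)
      qed
      obtain i where i: "i < n" "S i \<le> t" "t \<le> S (Suc i)"
        using find_interval[of n S t, OF Smono _ t0] n1 S_def by auto
      note rfi = rf[OF i(1)] and fci = face[OF i(1)]
      have SS: "S (Suc i) = S i + 2 * \<theta> i" unfolding S_def by simp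
      have "y i \<noteq> 0" using fci by auto
      then have yn: "cmod (y i) > 0" by simp
      have xy: "x i * cis (\<epsilon> * \<theta> i) = of_real (R / cmod (y i)) * y i"
        using rfi yn R0 by (simp add: field_simps)
      have zd: "cmod (z - c v) \<le> R * sqrt (1 - k^2)" using zin unfolding \<rho>_def s_def .
      show ?thesis
      proof (cases "t - S i \<le> \<theta> i")
        case True
        define s' where "s' = t - S i"
        note W = wedge[OF eps _ _ _ True[folded s'_def], of] 
        have s'0: "0 \<le> s'" using i unfolding s'_def by simp
        note W = wedge[OF eps conjunct1[OF rfi] conjunct1[OF conjunct2[OF rfi]] s'0 True[folded s'_def]]
        define A where "A = sin (\<theta> i - s') / sin (\<theta> i)"
        define Bc where "Bc = sin s' / sin (\<theta> i)"
        have "q = of_real \<mu> * x 0 * cis (\<epsilon> * S i) * cis (\<epsilon> * s')"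
          unfolding qt s'_def by (simp add: mult.assoc cis_mult algebra_simps)
        also have "\<dots> = of_real \<mu> * x i * (of_real A + of_real Bc * cis (\<epsilon> * \<theta> i))"
          using xS[OF i(1)] W(1) unfolding A_def Bc_def by simp
        also have "\<dots> = of_real (\<mu> * A) * x i + of_real (\<mu> * Bc * (R / cmod (y i))) * y i"
          using xy by (simp add: algebra_simps)
        finally have qd: "z - c v = of_real (\<mu> * A) * (c (bs ! i) - c v) + of_real (\<mu> * Bc * (R / cmod (y i))) * (c (ws ! i) - c v)"
          unfolding q_def x_def y_def .
        have "z \<in> convex hull {c v, c (bs ! i), c (ws ! i)}"
          apply (rule tri_lemma[OF _ R0 _ k0 k1 qd _ _ zd])
          subgoal using fci unfolding x_def by simp
          subgoal using fci by simp
          subgoal using W(2) mu0 unfolding A_def[symmetric] by simp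
          subgoal using W(3) mu0 R0 yn unfolding Bc_def[symmetric] by (intro mult_nonneg_nonneg) auto
          done
        then show ?thesis using kite1 i(1) by blast
      next
        case False
        define s' where "s' = t - S i - \<theta> i"
        have s'0: "0 \<le> s'" "s' \<le> \<theta> i" using False i SS unfolding s'_def by auto
        note W = wedge[OF eps conjunct1[OF rfi] conjunct1[OF conjunct2[OF rfi]] s'0]
        define A where "A = sin (\<theta> i - s') / sin (\<theta> i)"
        define Bc where "Bc = sin s' / sin (\<theta> i)"
        have "q = of_real \<mu> * x 0 * cis (\<epsilon> * S i) * cis (\<epsilon> * \<theta> i) * cis (\<epsilon> * s')"
          unfolding qt s'_def by (simp add: mult.assoc cis_mult algebra_simps)
        also have "\<dots> = of_real \<mu> * (x i * cis (\<epsilon> * \<theta> i)) * (of_real A + of_real Bc * cis (\<epsilon> * \<theta> i))"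
          using xS[OF i(1)] W(1) unfolding A_def Bc_def by (simp add: mult.assoc)
        also have "\<dots> = of_real \<mu> * of_real A * (x i * cis (\<epsilon> * \<theta> i)) + of_real \<mu> * of_real Bc * (x i * (cis (\<epsilon> * \<theta> i) * cis (\<epsilon> * \<theta> i)))"
          by (simp add: algebra_simps)
        also have "cis (\<epsilon> * \<theta> i) * cis (\<epsilon> * \<theta> i) = cis (2 * \<epsilon> * \<theta> i)"
          unfolding cis_mult by (simp add: algebra_simps)
        also have "of_real \<mu> * of_real A * (x i * cis (\<epsilon> * \<theta> i)) = of_real (\<mu> * A * (R / cmod (y i))) * y i"
          unfolding xy by simp
        also have "of_real (\<mu> * A * (R / cmod (y i))) * y i + of_real \<mu> * of_real Bc * (x i * cis (2 * \<epsilon> * \<theta> i)) = of_real (\<mu> * A * (R / cmod (y i))) * y i + of_real (\<mu> * Bc) * (x i * cis (2 * \<epsilon> * \<theta> i))"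
          by simp
        also have "\<dots> = of_real (\<mu> * Bc) * x (j i) + of_real (\<mu> * A * (R / cmod (y i))) * y i"
          using rfi by simp
        finally have qd: "z - c v = of_real (\<mu> * Bc) * (c (bs ! j i) - c v) + of_real (\<mu> * A * (R / cmod (y i))) * (c (ws ! i) - c v)"
          unfolding q_def x_def y_def .
        have "z \<in> convex hull {c v, c (bs ! j i), c (ws ! i)}"
          apply (rule tri_lemma[OF _ R0 _ k0 k1 qd _ _ zd])
          subgoal using fci unfolding x_def by simp
          subgoal using fci by simp
          subgoal using W(3) mu0 unfolding Bc_def[symmetric] by simp
          subgoal using W(2) mu0 R0 yn unfolding A_def[symmetric] by (intro mult_nonneg_nonneg) auto
          done
        then show ?thesis using kite2 i(1) by blast
      qed
    qed
    show "\<exists>z \<rho>. \<rho> > 0 \<and> cball z \<rho> \<subseteq> Sset F c r v \<and> r v \<le> C * \<rho>"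
    proof (intro exI[of _ "c v"] exI[of _ \<rho>] conjI rho0(1) subsetI)
      fix z assume "z \<in> cball (c v) \<rho>"
      then have zd: "cmod (z - c v) \<le> \<rho>" by (simp add: dist_norm norm_minus_commute)
      then have "z \<in> cball (c v) (r v)" using rho0 unfolding R_def by (simp add: dist_norm norm_minus_commute)
      moreover have "z \<in> Dset F c v" using cover[OF zd] unfolding Dset_def fa' by auto
      ultimately show "z \<in> Sset F c r v" unfolding Sset_def by simp
    next
      show "r v \<le> C * \<rho>" unfolding C_def \<rho>_def R_def using s0 by simp
    qed
  qed
qed

end
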